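(* Let $\mathcal{H}^{(1)}$ be the right $\mathbb{H}$-vector space of $1$-forms $\omega=df$ on $\mathbb{H}$ invariant under translation by $L$ with $f:\mathbb{H}\to\mathbb{H}$ left-regular. Then the period map $P:\mathcal{H}^{(1)}\to\mathbb{H}^4$, $P(\omega)={}^t(\int_{\gamma_1}\omega,\dots,\int_{\gamma_4}\omega)$, is injective.
   Context: $L\subset\mathbb{H}$ is a full-rank lattice with $\mathbb{Z}$-basis $\lambda_1,\dots,\lambda_4$ and $\gamma_h(s)=(s-\frac12)\lambda_h$, $s\in[0,1]$. With $q=t+e_1x_1+e_2x_2+e_3x_3$, $f$ is left-regular if $\partial_tf+e_1\partial_{x_1}f+e_2\partial_{x_2}f+e_3\partial_{x_3}f=0$. *)

theory Defs
  imports "HOL-Analysis.Analysis"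
begin

text \<open>Quaternions q = t + e1 x1 + e2 x2 + e3 x3 are represented as vectors in real^4;
  coordinates t, x1, x2, x3 are the components with indices 1, 2, 3, 4 of the index type 4.\<close>

definition qmk :: "real \<Rightarrow> real \<Rightarrow> real \<Rightarrow> real \<Rightarrow> real^4" where
  "qmk a b c d = (\<chi> i. if i = 1 then a else if i = 2 then b else if i = 3 then c else d)"

definition qt :: "real^4 \<Rightarrow> real" where "qt q = q $ 1"
definition qx1 :: "real^4 \<Rightarrow> real" where "qx1 q = q $ 2"
definition qx2 :: "real^4 \<Rightarrow> real" where "qx2 q = q $ 3"
definition qx3 :: "real^4 \<Rightarrow> real" where "qx3 q = q $ 4"

text \<open>Hamilton product (e1^2 = e2^2 = e3^2 = e1 e2 e3 = -1).\<close>
definition qmult :: "real^4 \<Rightarrow> real^4 \<Rightarrow> real^4" where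
  "qmult p q = qmk
     (qt p * qt q - qx1 p * qx1 q - qx2 p * qx2 q - qx3 p * qx3 q)
     (qt p * qx1 q + qx1 p * qt q + qx2 p * qx3 q - qx3 p * qx2 q)
     (qt p * qx2 q - qx1 p * qx3 q + qx2 p * qt q + qx3 p * qx1 q)
     (qt p * qx3 q + qx1 p * qx2 q - qx2 p * qx1 q + qx3 p * qt q)"

definition qone :: "real^4" where "qone = qmk 1 0 0 0"
definition qe1 :: "real^4" where "qe1 = qmk 0 1 0 0"
definition qe2 :: "real^4" where "qe2 = qmk 0 0 1 0"
definition qe3 :: "real^4" where "qe3 = qmk 0 0 0 1"

text \<open>Left-regular (Fueter): f is C^1 (derivative f' q, with continuous partial derivatives)
  and  d_t f + e1 d_x1 f + e2 d_x2 f + e3 d_x3 f = 0 (left multiplication by e_i).\<close>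
definition left_regular :: "(real^4 \<Rightarrow> real^4) \<Rightarrow> bool" where
  "left_regular f \<longleftrightarrow> (\<exists>f'. (\<forall>q. (f has_derivative f' q) (at q))
      \<and> (\<forall>v. continuous_on UNIV (\<lambda>q. f' q v))
      \<and> (\<forall>q. f' q qone + qmult qe1 (f' q qe1) + qmult qe2 (f' q qe2)
               + qmult qe3 (f' q qe3) = 0))"

definition lattice :: "(nat \<Rightarrow> real^4) \<Rightarrow> (real^4) set" where
  "lattice lam = {(\<Sum>h\<in>{1..4}. of_int (n h) *\<^sub>R lam h) | n :: nat \<Rightarrow> int. True}"

text \<open>A quaternion-valued 1-form is represented by the map q \<mapsto> (linear map on tangent vectors).
  H1 lam: the 1-forms omega = df, f left-regular, invariant under translation by L.\<close>
definition H1 :: "(nat \<Rightarrow> real^4) \<Rightarrow> (real^4 \<Rightarrow> real^4 \<Rightarrow> real^4) set" where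
  "H1 lam = {\<omega>. (\<exists>f. left_regular f \<and> (\<forall>q. (f has_derivative \<omega> q) (at q)))
                 \<and> (\<forall>l\<in>lattice lam. \<forall>q. \<omega> (q + l) = \<omega> q)}"

definition form_integral :: "(real^4 \<Rightarrow> real^4 \<Rightarrow> real^4) \<Rightarrow> (real \<Rightarrow> real^4) \<Rightarrow> real^4" where
  "form_integral \<omega> g = integral {0..1} (\<lambda>s. \<omega> (g s) (vector_derivative g (at s within {0..1})))"

definition gam :: "(nat \<Rightarrow> real^4) \<Rightarrow> nat \<Rightarrow> real \<Rightarrow> real^4" where
  "gam lam h s = (s - 1/2) *\<^sub>R lam h"

definition period_map :: "(nat \<Rightarrow> real^4) \<Rightarrow> (real^4 \<Rightarrow> real^4 \<Rightarrow> real^4) \<Rightarrow> real^4^4" where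
  "period_map lam \<omega> = (\<chi> i. form_integral \<omega> (gam lam (if i = 1 then 1 else if i = 2 then 2
                                                    else if i = 3 then 3 else 4)))"

end

theory Submission
  imports Defs
begin

hide_const (open) Polynomial.content


lemma box_slice:
  fixes a b x :: "'a::euclidean_space"
  assumes "k \<in> Basis"
  shows "x \<in> cbox a b \<longleftrightarrow> (a\<bullet>k \<le> x\<bullet>k \<and> x\<bullet>k \<le> b\<bullet>k) \<and> (\<forall>i\<in>Basis-{k}. a\<bullet>i \<le> x\<bullet>i \<and> x\<bullet>i \<le> b\<bullet>i)"
  using assms by (auto simp: mem_box)

lemma shift_basis_01:
  fixes F :: "'a::euclidean_space \<Rightarrow> real"
  assumes cont: "continuous_on UNIV F" and k: "k \<in> Basis"
    and per: "\<And>y. F (y + k) = F y" and t: "0 \<le> t" "t \<le> 1"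
  shows "integral (cbox 0 One) (\<lambda>y. F (y + t *\<^sub>R k)) = integral (cbox 0 One) F"
proof -
  define D where "D = cbox (t *\<^sub>R k) (One + t *\<^sub>R k)"
  define b where "b = (One::'a) - (1 - t) *\<^sub>R k"
  have intD: "F integrable_on D" unfolding D_def
    by (rule integrable_continuous, rule continuous_on_subset[OF cont], simp)
  have intC: "F integrable_on cbox 0 One"
    by (rule integrable_continuous, rule continuous_on_subset[OF cont], simp)
  have "integral (cbox 0 One) (\<lambda>y. F (y + t *\<^sub>R k)) = integral D F"
  proof -
    have "((F \<circ> (+) (t *\<^sub>R k)) has_integral integral D F) (cbox 0 One)"
      using has_integral_shift_cbox_iff[of F "t *\<^sub>R k" "integral D F" 0 One] intD
      unfolding D_def by (simp add: add.commute has_integral_integral)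
    then show ?thesis by (simp add: o_def add.commute integral_unique)
  qed
  also have "\<dots> = integral (D \<inter> {x. x\<bullet>k \<le> 1}) F + integral (D \<inter> {x. x\<bullet>k \<ge> 1}) F"
    using integral_split[OF _ k] intD unfolding D_def by blast
  also have "D \<inter> {x. x\<bullet>k \<le> 1} = cbox 0 One \<inter> {x. x\<bullet>k \<ge> t}"
    using k t unfolding D_def
    by (auto simp: box_slice[OF k] inner_Basis inner_add_left algebra_simps split: if_splits)
  also have "D \<inter> {x. x\<bullet>k \<ge> 1} = cbox (0 + k) (b + k)"
    using k t unfolding D_def b_def
    by (auto simp: box_slice[OF k] inner_Basis inner_add_left inner_diff_left algebra_simps split: if_splits)
  also have "integral (cbox (0 + k) (b + k)) F = integral (cbox 0 b) F"
  proof -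
    have "F integrable_on cbox (0 + k) (b + k)"
      by (rule integrable_continuous, rule continuous_on_subset[OF cont], simp)
    then have "((F \<circ> (+) k) has_integral integral (cbox (0 + k) (b + k)) F) (cbox 0 b)"
      using has_integral_shift_cbox_iff by blast
    moreover have "F \<circ> (+) k = F" using per by (auto simp: o_def add.commute)
    ultimately show ?thesis by (simp add: integral_unique)
  qed
  also have "cbox 0 b = cbox 0 One \<inter> {x. x\<bullet>k \<le> t}"
    using k t unfolding b_def
    by (auto simp: box_slice[OF k] inner_Basis inner_diff_left algebra_simps split: if_splits)
  also have "integral (cbox 0 One \<inter> {x. x \<bullet> k \<ge> t}) F + integral (cbox 0 One \<inter> {x. x\<bullet>k \<le> t}) F
      = integral (cbox 0 One) F"
    using integral_split[OF intC k, of t] by simp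
  finally show ?thesis .
qed

lemma shift_basis:
  fixes F :: "'a::euclidean_space \<Rightarrow> real"
  assumes cont: "continuous_on UNIV F" and k: "k \<in> Basis"
    and per: "\<And>y. F (y + k) = F y" and t: "\<bar>t\<bar> \<le> 1"
  shows "integral (cbox 0 One) (\<lambda>y. F (y + t *\<^sub>R k)) = integral (cbox 0 One) F"
proof (cases "t \<ge> 0")
  case True then show ?thesis using shift_basis_01[OF cont k per] t by simp
next
  case False
  have "F (y + t *\<^sub>R k) = F (y + (t+1) *\<^sub>R k)" for y
    using per[of "y + t *\<^sub>R k"] by (simp add: algebra_simps)
  then show ?thesis using shift_basis_01[OF cont k per, of "t+1"] t False by simp
qed

lemma shift_gen:
  fixes F :: "'a::euclidean_space \<Rightarrow> real"
  assumes cont: "continuous_on UNIV F"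
    and per: "\<And>k y. k \<in> Basis \<Longrightarrow> F (y + k) = F y" and w: "\<And>k. k \<in> Basis \<Longrightarrow> \<bar>w \<bullet> k\<bar> \<le> 1"
  shows "integral (cbox 0 One) (\<lambda>y. F (y + w)) = integral (cbox 0 One) F"
proof -
  have "\<And>F. continuous_on UNIV F \<Longrightarrow> (\<And>k y. k \<in> Basis \<Longrightarrow> F (y + k) = F y) \<Longrightarrow>
     integral (cbox 0 One) (\<lambda>y. F (y + (\<Sum>k\<in>S. (w\<bullet>k) *\<^sub>R k))) = integral (cbox 0 One) (F::'a\<Rightarrow>real)"
    if "S \<subseteq> Basis" for S
  proof -
    have "finite S" using that finite_Basis finite_subset by blast
    then show "\<And>F. continuous_on UNIV F \<Longrightarrow> (\<And>k y. k \<in> Basis \<Longrightarrow> F (y + k) = F y) \<Longrightarrow>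
     integral (cbox 0 One) (\<lambda>y. F (y + (\<Sum>k\<in>S. (w\<bullet>k) *\<^sub>R k))) = integral (cbox 0 One) (F::'a\<Rightarrow>real)"
      using that
    proof (induction S)
      case empty then show ?case by simp
    next
      case (insert k S)
      define F2 where "F2 = (\<lambda>z. F (z + (\<Sum>k\<in>S. (w\<bullet>k) *\<^sub>R k)))"
      have c2: "continuous_on UNIV F2" unfolding F2_def
        by (rule continuous_on_compose2[OF insert.prems(1)]) (auto intro!: continuous_intros)
      have p2: "F2 (y + j) = F2 y" if "j \<in> Basis" for j y
        using insert.prems(2)[OF that, of "y + (\<Sum>k\<in>S. (w\<bullet>k) *\<^sub>R k)"] unfolding F2_def
        by (simp add: algebra_simps)
      have kB: "k \<in> Basis" using insert by auto
      have "integral (cbox 0 One) (\<lambda>y. F (y + (\<Sum>k\<in>insert k S. (w\<bullet>k) *\<^sub>R k)))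
          = integral (cbox 0 One) (\<lambda>y. F2 (y + (w\<bullet>k) *\<^sub>R k))"
        using insert.hyps unfolding F2_def by (simp add: algebra_simps)
      also have "\<dots> = integral (cbox 0 One) F2"
        using shift_basis[OF c2 kB p2[OF kB] w[OF kB]] .
      also have "\<dots> = integral (cbox 0 One) F"
        unfolding F2_def using insert by simp
      finally show ?case .
    qed
  qed
  from this[OF order_refl cont per] show ?thesis by (simp add: euclidean_representation)
qed

lemma int_cont:
  fixes F :: "'a::euclidean_space \<Rightarrow> real"
  shows "continuous_on UNIV F \<Longrightarrow> F integrable_on cbox a b"
  by (rule integrable_continuous, rule continuous_on_subset, auto)

lemma deriv_line:
  fixes F :: "'a::euclidean_space \<Rightarrow> real"
  assumes der: "\<And>y. (F has_derivative F' y) (at y)"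
  shows "((\<lambda>z. F (y + z *\<^sub>R v)) has_real_derivative F' (y + z *\<^sub>R v) v) (at z)"
proof -
  have lin: "linear (F' (y + z *\<^sub>R v))" using der has_derivative_linear by blast
  have "((\<lambda>z. F (y + z *\<^sub>R v)) has_derivative (\<lambda>h. F' (y + z *\<^sub>R v) (h *\<^sub>R v))) (at z)"
    by (rule has_derivative_compose[OF _ der], auto intro!: derivative_eq_intros)
  then show ?thesis
    by (rule has_derivative_imp_has_field_derivative) (simp add: linear_cmul[OF lin])
qed

lemma dq_unif:
  fixes F :: "'a::euclidean_space \<Rightarrow> real"
  assumes der: "\<And>y. (F has_derivative F' y) (at y)"
    and cont: "continuous_on UNIV (\<lambda>y. F' y v)" and e: "e > 0"
  obtains d where "d > 0" "\<And>y s. y \<in> cbox 0 One \<Longrightarrow> s \<noteq> 0 \<Longrightarrow> \<bar>s\<bar> < d \<Longrightarrow>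
      \<bar>(F (y + s *\<^sub>R v) - F y) / s - F' y v\<bar> \<le> e"
proof -
  define K where "K = cball (0::'a) (norm (One::'a) + 1)"
  have "uniformly_continuous_on K (\<lambda>y. F' y v)"
    unfolding K_def by (rule compact_uniformly_continuous[OF continuous_on_subset[OF cont]]) auto
  then obtain d0 where d0: "d0 > 0" and d0u: "\<And>x x'. x \<in> K \<Longrightarrow> x' \<in> K \<Longrightarrow> dist x' x < d0 \<Longrightarrow>
       dist (F' x' v) (F' x v) < e"
    unfolding uniformly_continuous_on_def using e by blast
  define d where "d = min (d0 / (norm v + 1)) (1 / (norm v + 1))"
  have nv1: "norm v + 1 > 0" using norm_ge_zero[of v] by linarith
  have dpos: "d > 0" unfolding d_def using d0 nv1 by simp
  have key: "\<bar>F' (y + z *\<^sub>R v) v - F' y v\<bar> < e" if y: "y \<in> cbox 0 One" and z: "\<bar>z\<bar> < d" for y z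
  proof -
    have nv: "norm (z *\<^sub>R v) \<le> \<bar>z\<bar> * norm v" by simp
    have "\<bar>z\<bar> * norm v \<le> d * norm v" using z by (simp add: mult_right_mono)
    also have "\<dots> < d * (norm v + 1)" using dpos by simp
    finally have zl: "\<bar>z\<bar> * norm v < d * (norm v + 1)" .
    have "d \<le> d0 / (norm v + 1)" unfolding d_def by simp
    then have "d * (norm v + 1) \<le> d0" using nv1 by (simp add: pos_le_divide_eq)
    moreover have "d \<le> 1 / (norm v + 1)" unfolding d_def by simp
    then have "d * (norm v + 1) \<le> 1" using nv1 by (simp add: pos_le_divide_eq)
    ultimately have n1: "norm (z *\<^sub>R v) < d0" "norm (z *\<^sub>R v) < 1" using zl nv by linarith+
    have ny: "norm y \<le> norm (One::'a)"
      using y by (intro norm_le_componentwise) (auto simp: mem_box)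
    have "y \<in> K" unfolding K_def using ny by simp
    moreover have "y + z *\<^sub>R v \<in> K"
    proof -
      have "norm (y + z *\<^sub>R v) < norm (One::'a) + 1"
        using norm_triangle_ineq[of y "z *\<^sub>R v"] ny n1(2) by linarith
      then show ?thesis unfolding K_def mem_cball_0 by simp
    qed
    moreover have "dist (y + z *\<^sub>R v) y < d0" using n1 by (simp add: dist_norm)
    ultimately show ?thesis using d0u by (simp add: dist_real_def)
  qed
  show ?thesis
  proof (rule that[OF dpos])
    fix y :: 'a and s :: real assume y: "y \<in> cbox 0 One" and s: "s \<noteq> 0" "\<bar>s\<bar> < d"
    have D: "\<And>z. DERIV (\<lambda>z. F (y + z *\<^sub>R v)) z :> F' (y + z *\<^sub>R v) v"
      using deriv_line[OF der] .
    obtain z where z: "\<bar>z\<bar> < d" and eq: "F (y + s *\<^sub>R v) - F y = s * F' (y + z *\<^sub>R v) v"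
    proof (cases "s > 0")
      case True
      from MVT2[OF True D] obtain z where "0 < z" "z < s"
        "F (y + s *\<^sub>R v) - F (y + 0 *\<^sub>R v) = (s - 0) * F' (y + z *\<^sub>R v) v" by blast
      then show ?thesis using that[of z] s by auto
    next
      case False
      then have "s < 0" using s by simp
      from MVT2[OF this D] obtain z where "s < z" "z < 0"
        "F (y + 0 *\<^sub>R v) - F (y + s *\<^sub>R v) = (0 - s) * F' (y + z *\<^sub>R v) v" by blast
      then show ?thesis using that[of z] s by (auto simp: algebra_simps)
    qed
    then have "(F (y + s *\<^sub>R v) - F y) / s = F' (y + z *\<^sub>R v) v" using s by simp
    then show "\<bar>(F (y + s *\<^sub>R v) - F y) / s - F' y v\<bar> \<le> e" using key[OF y z] by simp
  qed
qed

lemma zero_by_eps: "(\<And>e. e > 0 \<Longrightarrow> \<bar>x::real\<bar> \<le> e) \<Longrightarrow> x = 0"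
proof (rule ccontr)
  assume h: "\<And>e. e > 0 \<Longrightarrow> \<bar>x\<bar> \<le> e" and "x \<noteq> 0"
  then have "\<bar>x\<bar> \<le> \<bar>x\<bar> / 2" using h[of "\<bar>x\<bar> / 2"] by simp
  then show False using \<open>x \<noteq> 0\<close> by simp
qed

lemma cont_of_der:
  assumes "\<And>y. (F has_derivative F' y) (at y)"
  shows "continuous_on UNIV F"
  using assms has_derivative_continuous continuous_at_imp_continuous_on by blast

lemma ibp:
  fixes F :: "'a::euclidean_space \<Rightarrow> real"
  assumes der: "\<And>y. (F has_derivative F' y) (at y)"
    and cont: "continuous_on UNIV (\<lambda>y. F' y v)"
    and per: "\<And>k y. k \<in> Basis \<Longrightarrow> F (y + k) = F y"
  shows "integral (cbox 0 One) (\<lambda>y. F' y v) = 0"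
proof (rule zero_by_eps)
  fix e :: real assume e: "e > 0"
  have contF: "continuous_on UNIV F" using cont_of_der[OF der] .
  obtain d where d: "d > 0" and dq: "\<And>y s. y \<in> cbox 0 One \<Longrightarrow> s \<noteq> 0 \<Longrightarrow> \<bar>s\<bar> < d \<Longrightarrow>
      \<bar>(F (y + s *\<^sub>R v) - F y) / s - F' y v\<bar> \<le> e"
    using dq_unif[OF der cont e] by blast
  have nv1: "norm v + 1 > 0" using norm_ge_zero[of v] by linarith
  define s where "s = min (d/2) (1 / (norm v + 1))"
  have s0: "s > 0" "s < d" unfolding s_def using d nv1 by auto
  have sv: "\<bar>(s *\<^sub>R v) \<bullet> k\<bar> \<le> 1" if "k \<in> Basis" for k
  proof -
    have "\<bar>(s *\<^sub>R v) \<bullet> k\<bar> = s * \<bar>v \<bullet> k\<bar>" using s0 by (simp add: abs_mult)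
    also have "\<dots> \<le> s * norm v" using Basis_le_norm[OF that] s0 by (simp add: mult_left_mono)
    also have "\<dots> \<le> (1 / (norm v + 1)) * (norm v + 1)"
      by (rule mult_mono) (use s0 nv1 in \<open>auto simp: s_def\<close>)
    also have "\<dots> = 1" using nv1 by simp
    finally show ?thesis .
  qed
  have c1: "continuous_on UNIV (\<lambda>y. F (y + s *\<^sub>R v))"
    by (rule continuous_on_compose2[OF contF]) (auto intro!: continuous_intros)
  have sh: "integral (cbox 0 One) (\<lambda>y. F (y + s *\<^sub>R v)) = integral (cbox 0 One) F"
    using shift_gen[OF contF per sv] by blast
  define Q where "Q = (\<lambda>y. (F (y + s *\<^sub>R v) - F y) / s)"
  have iQ: "integral (cbox 0 One) Q = 0"
  proof -
    have "integral (cbox 0 One) Q = integral (cbox 0 One) (\<lambda>y. F (y + s *\<^sub>R v) - F y) / s"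
      unfolding Q_def by (simp add: divide_inverse)
    also have "\<dots> = 0" by (subst integral_diff) (auto simp: sh int_cont[OF c1] int_cont[OF contF])
    finally show ?thesis .
  qed
  have cQ: "continuous_on UNIV Q" unfolding Q_def
    by (intro continuous_intros c1 contF) (use s0 in auto)
  have "integral (cbox 0 One) (\<lambda>y. F' y v) = integral (cbox 0 One) (\<lambda>y. F' y v - Q y)"
    by (subst integral_diff) (auto simp: iQ int_cont[OF cQ] int_cont[OF cont])
  also have "\<bar>\<dots>\<bar> \<le> e"
  proof -
    have ci: "continuous_on UNIV (\<lambda>y. F' y v - Q y)" using cont cQ by (intro continuous_intros)
    have b: "\<And>y. y \<in> cbox 0 One \<Longrightarrow> norm (F' y v - Q y) \<le> e"
      using dq s0 by (auto simp: Q_def abs_minus_commute)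
    have "norm (integral (cbox 0 One) (\<lambda>y. F' y v - Q y)) \<le> e * content (cbox (0::'a) One)"
      by (rule has_integral_bound[OF _ integrable_integral[OF int_cont[OF ci]] b]) (use e in simp)
    then show ?thesis by simp
  qed
  finally show "\<bar>integral (cbox 0 One) (\<lambda>y. F' y v)\<bar> \<le> e" by simp
qed

lemma int_cmul_real: "integral S (\<lambda>x. c * f x) = c * integral S (f :: 'a::euclidean_space \<Rightarrow> real)"
  using integral_cmul[of S c f] by simp

lemma int_add_c:
  fixes f g :: "'a::euclidean_space \<Rightarrow> real"
  shows "continuous_on UNIV f \<Longrightarrow> continuous_on UNIV g \<Longrightarrow>
    integral (cbox a b) (\<lambda>x. f x + g x) = integral (cbox a b) f + integral (cbox a b) g"
  by (intro integral_add int_cont)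

lemma int_diff_c:
  fixes f g :: "'a::euclidean_space \<Rightarrow> real"
  shows "continuous_on UNIV f \<Longrightarrow> continuous_on UNIV g \<Longrightarrow>
    integral (cbox a b) (\<lambda>x. f x - g x) = integral (cbox a b) f - integral (cbox a b) g"
  by (intro integral_diff int_cont)

lemma cshift:
  fixes f :: "'a::real_normed_vector \<Rightarrow> 'b::topological_space"
  shows "continuous_on UNIV f \<Longrightarrow> continuous_on UNIV (\<lambda>y. f (y + c))"
  by (rule continuous_on_compose2[of UNIV f]) (auto intro!: continuous_intros)

lemma der_shift:
  assumes "\<And>y. (F has_derivative F' y) (at y)"
  shows "((\<lambda>y. F (y + c)) has_derivative F' (y + c)) (at y)"
proof -
  have "((\<lambda>y. y + c) has_derivative (\<lambda>h. h)) (at y)" by (auto intro!: derivative_eq_intros)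
  from has_derivative_compose[OF this assms] show ?thesis by (simp add: o_def)
qed

lemma bound_C:
  fixes f :: "'a::euclidean_space \<Rightarrow> real"
  assumes "continuous_on UNIV f"
  obtains M where "M \<ge> 0" "\<And>y. y \<in> cbox 0 One \<Longrightarrow> \<bar>f y\<bar> \<le> M"
  using continuous_on_compact_bound[OF compact_cbox continuous_on_subset[OF assms], of 0 One] by auto

lemma int_bound_C:
  fixes f :: "'a::euclidean_space \<Rightarrow> real"
  assumes "continuous_on UNIV f" "\<And>y. y \<in> cbox 0 One \<Longrightarrow> \<bar>f y\<bar> \<le> B" "B \<ge> 0"
  shows "\<bar>integral (cbox 0 One) f\<bar> \<le> B"
proof -
  have "norm (integral (cbox 0 One) f) \<le> B * content (cbox (0::'a) One)"
    by (rule has_integral_bound[OF _ integrable_integral[OF int_cont[OF assms(1)]]]) (use assms in auto)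
  then show ?thesis by simp
qed

lemma swap:
  fixes a b :: "'a::euclidean_space \<Rightarrow> real"
  assumes da: "\<And>y. (a has_derivative a' y) (at y)" and db: "\<And>y. (b has_derivative b' y) (at y)"
    and cau: "continuous_on UNIV (\<lambda>y. a' y u)" and cav: "continuous_on UNIV (\<lambda>y. a' y v)"
    and cbu: "continuous_on UNIV (\<lambda>y. b' y u)" and cbv: "continuous_on UNIV (\<lambda>y. b' y v)"
    and pa: "\<And>k y. k \<in> Basis \<Longrightarrow> a (y + k) = a y"
    and pb: "\<And>k y. k \<in> Basis \<Longrightarrow> b (y + k) = b y"
    and pbu: "\<And>k y. k \<in> Basis \<Longrightarrow> b' (y + k) u = b' y u"
  shows "integral (cbox 0 One) (\<lambda>y. a' y u * b' y v) = integral (cbox 0 One) (\<lambda>y. a' y v * b' y u)"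
proof -
  have ca: "continuous_on UNIV a" using cont_of_der[OF da] .
  have cb: "continuous_on UNIV b" using cont_of_der[OF db] .
  obtain Ma where Ma: "Ma \<ge> 0" "\<And>y. y \<in> cbox 0 One \<Longrightarrow> \<bar>a' y u\<bar> \<le> Ma" using bound_C[OF cau] by blast
  obtain Mb where Mb: "Mb \<ge> 0" "\<And>y. y \<in> cbox 0 One \<Longrightarrow> \<bar>b' y u\<bar> \<le> Mb" using bound_C[OF cbu] by blast
  have "integral (cbox 0 One) (\<lambda>y. a' y u * b' y v) - integral (cbox 0 One) (\<lambda>y. a' y v * b' y u) = 0"
  proof (rule zero_by_eps)
    fix e :: real assume e: "e > 0"
    define e' where "e' = e / (Ma + Mb + 1)"
    have e': "e' > 0" unfolding e'_def using e Ma Mb by simp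
    obtain d1 where d1: "d1 > 0" and dq1: "\<And>y s. y \<in> cbox 0 One \<Longrightarrow> s \<noteq> 0 \<Longrightarrow> \<bar>s\<bar> < d1 \<Longrightarrow>
      \<bar>(b (y + s *\<^sub>R v) - b y) / s - b' y v\<bar> \<le> e'"
      using dq_unif[OF db cbv e'] by blast
    obtain d2 where d2: "d2 > 0" and dq2: "\<And>y s. y \<in> cbox 0 One \<Longrightarrow> s \<noteq> 0 \<Longrightarrow> \<bar>s\<bar> < d2 \<Longrightarrow>
      \<bar>(a (y + s *\<^sub>R v) - a y) / s - a' y v\<bar> \<le> e'"
      using dq_unif[OF da cav e'] by blast
    have nv1: "norm v + 1 > 0" using norm_ge_zero[of v] by linarith
    define s where "s = min (min d1 d2 / 2) (1 / (norm v + 1))"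
    have s0: "s > 0" "s < d1" "s < d2" unfolding s_def using d1 d2 nv1 by auto
    have sv: "\<bar>(c *\<^sub>R v) \<bullet> k\<bar> \<le> 1" if "k \<in> Basis" "\<bar>c\<bar> \<le> s" for k c
    proof -
      have "\<bar>(c *\<^sub>R v) \<bullet> k\<bar> = \<bar>c\<bar> * \<bar>v \<bullet> k\<bar>" by (simp add: abs_mult)
      also have "\<dots> \<le> s * norm v" using Basis_le_norm[OF that(1)] that(2) by (simp add: mult_mono)
      also have "\<dots> \<le> (1 / (norm v + 1)) * (norm v + 1)"
        by (rule mult_mono) (use s0 nv1 in \<open>auto simp: s_def\<close>)
      also have "\<dots> = 1" using nv1 by simp
      finally show ?thesis .
    qed
    define bq where "bq = (\<lambda>y. (b (y + s *\<^sub>R v) - b y) / s)"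
    define aq where "aq = (\<lambda>y. (a (y + (-s) *\<^sub>R v) - a y) / (-s))"
    have cbs: "continuous_on UNIV (\<lambda>y. b (y + c))" for c using cshift[OF cb] .
    have cas: "continuous_on UNIV (\<lambda>y. a (y + c))" for c using cshift[OF ca] .
    have cbus: "continuous_on UNIV (\<lambda>y. b' (y + c) u)" for c using cshift[OF cbu] .
    have cbq: "continuous_on UNIV bq" unfolding bq_def using s0 by (intro continuous_intros cbs cb) auto
    have caq: "continuous_on UNIV aq" unfolding aq_def using s0 by (intro continuous_intros cas ca) auto
    have A: "integral (cbox 0 One) (\<lambda>y. a' y u * bq y) = integral (cbox 0 One) (\<lambda>y. aq y * b' y u)"
    proof -
      define P where "P = (\<lambda>y. a y * bq y)"
      define P' where "P' = (\<lambda>y h. a' y h * bq y + (1/s) * (a y * b' (y + s *\<^sub>R v) h - a y * b' y h))"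
      have dbs: "((\<lambda>y. b (y + s *\<^sub>R v)) has_derivative b' (y + s *\<^sub>R v)) (at y)" for y
        using der_shift[OF db] .
      have dP: "(P has_derivative P' y) (at y)" for y
      proof -
        have dbq: "(bq has_derivative (\<lambda>h. (b' (y + s *\<^sub>R v) h - b' y h) / s)) (at y)"
          unfolding bq_def
          by (rule bounded_linear.has_derivative[OF bounded_linear_divide has_derivative_diff[OF dbs db]])
        show ?thesis unfolding P_def
          by (rule has_derivative_eq_rhs[OF has_derivative_mult[OF da dbq]])
             (use s0 in \<open>auto simp: P'_def fun_eq_iff field_simps\<close>)
      qed
      have cP': "continuous_on UNIV (\<lambda>y. P' y u)" unfolding P'_def
        by (intro continuous_intros cau cbq ca cbus cbu)
      have pP: "P (y + k) = P y" if "k \<in> Basis" for k y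
      proof -
        have "b (y + k + s *\<^sub>R v) = b (y + s *\<^sub>R v)"
          using pb[OF that, of "y + s *\<^sub>R v"] by (simp add: add_ac)
        then show ?thesis unfolding P_def bq_def using pa[OF that] pb[OF that] by simp
      qed
      have z: "integral (cbox 0 One) (\<lambda>y. P' y u) = 0" using ibp[OF dP cP' pP] by blast
      define J where "J = integral (cbox 0 One) (\<lambda>y. a y * b' (y + s *\<^sub>R v) u)"
      define I3 where "I3 = integral (cbox 0 One) (\<lambda>y. a y * b' y u)"
      define I4 where "I4 = integral (cbox 0 One) (\<lambda>y. a (y + (-s) *\<^sub>R v) * b' y u)"
      have "integral (cbox 0 One) (\<lambda>y. P' y u) = integral (cbox 0 One) (\<lambda>y. a' y u * bq y) + (1/s) * (J - I3)"
        unfolding P'_def J_def I3_def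
        by (subst int_add_c, (intro continuous_intros cau cbq ca cbus cbu)+,
            subst int_cmul_real, subst int_diff_c, (intro continuous_intros cau cbq ca cbus cbu)+, simp)
      moreover have "J = I4"
      proof -
        define H where "H = (\<lambda>z. a (z + (-s) *\<^sub>R v) * b' z u)"
        have cH: "continuous_on UNIV H" unfolding H_def by (intro continuous_intros cas cbu)
        have pH: "H (y + k) = H y" if "k \<in> Basis" for k y
        proof -
          have "a (y + k + (-s) *\<^sub>R v) = a (y + (-s) *\<^sub>R v)"
            using pa[OF that, of "y + (-s) *\<^sub>R v"] by (simp add: algebra_simps)
          then show ?thesis unfolding H_def using pbu[OF that] by simp
        qed
        have "integral (cbox 0 One) (\<lambda>y. H (y + s *\<^sub>R v)) = integral (cbox 0 One) H"
          by (rule shift_gen[OF cH pH sv]) (use s0 in auto)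
        then show ?thesis unfolding H_def J_def I4_def by (simp add: algebra_simps)
      qed
      moreover have "integral (cbox 0 One) (\<lambda>y. aq y * b' y u) = (1/(-s)) * (I4 - I3)"
      proof -
        have "integral (cbox 0 One) (\<lambda>y. aq y * b' y u) = integral (cbox 0 One)
            (\<lambda>y. (1/(-s)) * (a (y + (-s) *\<^sub>R v) * b' y u - a y * b' y u))"
          unfolding aq_def by (rule arg_cong[where f="integral _"]) (auto simp: fun_eq_iff field_simps)
        also have "\<dots> = (1/(-s)) * (I4 - I3)" unfolding I4_def I3_def
          by (subst int_cmul_real, subst int_diff_c, (intro continuous_intros cas ca cbu)+, simp)
        finally show ?thesis .
      qed
      ultimately show ?thesis using z s0 by (simp add: field_simps)
    qed
    have B: "\<bar>integral (cbox 0 One) (\<lambda>y. a' y u * b' y v) - integral (cbox 0 One) (\<lambda>y. a' y u * bq y)\<bar> \<le> Ma * e'"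
    proof -
      have "integral (cbox 0 One) (\<lambda>y. a' y u * b' y v) - integral (cbox 0 One) (\<lambda>y. a' y u * bq y)
          = integral (cbox 0 One) (\<lambda>y. a' y u * b' y v - a' y u * bq y)"
        by (rule int_diff_c[symmetric]) (intro continuous_intros cau cbv cbq)+
      also have "\<bar>\<dots>\<bar> \<le> Ma * e'"
      proof (rule int_bound_C)
        show "continuous_on UNIV (\<lambda>y. a' y u * b' y v - a' y u * bq y)"
          by (intro continuous_intros cau cbv cbq)
        show "0 \<le> Ma * e'" using Ma e' by simp
        fix y assume y: "y \<in> cbox (0::'a) One"
        have "\<bar>a' y u * b' y v - a' y u * bq y\<bar> = \<bar>a' y u\<bar> * \<bar>bq y - b' y v\<bar>"
          by (simp add: abs_mult[symmetric] algebra_simps)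
        also have "\<dots> \<le> Ma * e'" using Ma(2)[OF y] dq1[OF y, of s] s0 unfolding bq_def
          by (intro mult_mono) auto
        finally show "\<bar>a' y u * b' y v - a' y u * bq y\<bar> \<le> Ma * e'" .
      qed
      finally show ?thesis .
    qed
    have C: "\<bar>integral (cbox 0 One) (\<lambda>y. a' y v * b' y u) - integral (cbox 0 One) (\<lambda>y. aq y * b' y u)\<bar> \<le> Mb * e'"
    proof -
      have "integral (cbox 0 One) (\<lambda>y. a' y v * b' y u) - integral (cbox 0 One) (\<lambda>y. aq y * b' y u)
          = integral (cbox 0 One) (\<lambda>y. a' y v * b' y u - aq y * b' y u)"
        by (rule int_diff_c[symmetric]) (intro continuous_intros cav cbu caq)+
      also have "\<bar>\<dots>\<bar> \<le> Mb * e'"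
      proof (rule int_bound_C)
        show "continuous_on UNIV (\<lambda>y. a' y v * b' y u - aq y * b' y u)"
          by (intro continuous_intros cav cbu caq)
        show "0 \<le> Mb * e'" using Mb e' by simp
        fix y assume y: "y \<in> cbox (0::'a) One"
        have "\<bar>a' y v * b' y u - aq y * b' y u\<bar> = \<bar>b' y u\<bar> * \<bar>aq y - a' y v\<bar>"
          by (simp add: abs_mult[symmetric] algebra_simps)
        also have "\<dots> \<le> Mb * e'" using Mb(2)[OF y] dq2[OF y, of "-s"] s0 unfolding aq_def
          by (intro mult_mono) auto
        finally show "\<bar>a' y v * b' y u - aq y * b' y u\<bar> \<le> Mb * e'" .
      qed
      finally show ?thesis .
    qed
    have "Ma * e' + Mb * e' \<le> e"
    proof -
      have "Ma * e' + Mb * e' = (Ma + Mb) * e / (Ma + Mb + 1)" unfolding e'_def by (metis distrib_right times_divide_eq_right)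
      also have "\<dots> \<le> e" using Ma Mb e by (simp add: divide_le_eq)
      finally show ?thesis .
    qed
    then show "\<bar>integral (cbox 0 One) (\<lambda>y. a' y u * b' y v) - integral (cbox 0 One) (\<lambda>y. a' y v * b' y u)\<bar> \<le> e"
      using A B C by linarith
  qed
  then show ?thesis by simp
qed



lemma qmk_nth: "qmk a b c d $ 1 = a" "qmk a b c d $ 2 = b" "qmk a b c d $ 3 = c" "qmk a b c d $ 4 = d"
  by (simp_all add: qmk_def)

lemma q_axis: "qone = axis 1 1" "qe1 = axis 2 1" "qe2 = axis 3 1" "qe3 = axis 4 1"
  by (auto simp: vec_eq_iff forall_4 qone_def qe1_def qe2_def qe3_def qmk_def axis_def)

lemma lr_props:
  assumes "left_regular f" "\<And>q. (f has_derivative \<omega> q) (at q)"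
  shows "\<And>v. continuous_on UNIV (\<lambda>q. \<omega> q v)"
    and "\<And>q. \<omega> q qone + qmult qe1 (\<omega> q qe1) + qmult qe2 (\<omega> q qe2) + qmult qe3 (\<omega> q qe3) = 0"
proof -
  obtain f' where f': "\<And>q. (f has_derivative f' q) (at q)" "\<And>v. continuous_on UNIV (\<lambda>q. f' q v)"
    "\<And>q. f' q qone + qmult qe1 (f' q qe1) + qmult qe2 (f' q qe2) + qmult qe3 (f' q qe3) = 0"
    using assms(1) unfolding left_regular_def by blast
  have eq: "\<And>q. f' q = \<omega> q" using has_derivative_unique[OF f'(1) assms(2)] .
  show "\<And>v. continuous_on UNIV (\<lambda>q. \<omega> q v)" using f'(2) by (simp add: eq[symmetric])
  show "\<And>q. \<omega> q qone + qmult qe1 (\<omega> q qe1) + qmult qe2 (\<omega> q qe2) + qmult qe3 (\<omega> q qe3) = 0"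
    using f'(3) by (simp add: eq[symmetric])
qed

lemma fueter_comp:
  assumes "D qone + qmult qe1 (D qe1) + qmult qe2 (D qe2) + qmult qe3 (D qe3) = 0"
  shows "D (axis 1 1) $ 1 - D (axis 2 1) $ 2 - D (axis 3 1) $ 3 - D (axis 4 1) $ 4 = 0"
    "D (axis 1 1) $ 2 + D (axis 2 1) $ 1 + D (axis 3 1) $ 4 - D (axis 4 1) $ 3 = 0"
    "D (axis 1 1) $ 3 - D (axis 2 1) $ 4 + D (axis 3 1) $ 1 + D (axis 4 1) $ 2 = 0"
    "D (axis 1 1) $ 4 + D (axis 2 1) $ 3 - D (axis 3 1) $ 2 + D (axis 4 1) $ 1 = 0"
proof -
  have c: "(D qone + qmult qe1 (D qe1) + qmult qe2 (D qe2) + qmult qe3 (D qe3)) $ m = 0" for m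
    using assms by simp
  note s = qmult_def qmk_nth qt_def qx1_def qx2_def qx3_def q_axis[symmetric] qone_def qe1_def qe2_def qe3_def
  show "D (axis 1 1) $ 1 - D (axis 2 1) $ 2 - D (axis 3 1) $ 3 - D (axis 4 1) $ 4 = 0"
    using c[of 1] unfolding q_axis by (simp add: qmult_def qmk_nth qt_def qx1_def qx2_def qx3_def axis_def)
  show "D (axis 1 1) $ 2 + D (axis 2 1) $ 1 + D (axis 3 1) $ 4 - D (axis 4 1) $ 3 = 0"
    using c[of 2] unfolding q_axis by (simp add: qmult_def qmk_nth qt_def qx1_def qx2_def qx3_def axis_def)
  show "D (axis 1 1) $ 3 - D (axis 2 1) $ 4 + D (axis 3 1) $ 1 + D (axis 4 1) $ 2 = 0"
    using c[of 3] unfolding q_axis by (simp add: qmult_def qmk_nth qt_def qx1_def qx2_def qx3_def axis_def)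
  show "D (axis 1 1) $ 4 + D (axis 2 1) $ 3 - D (axis 3 1) $ 2 + D (axis 4 1) $ 1 = 0"
    using c[of 4] unfolding q_axis by (simp add: qmult_def qmk_nth qt_def qx1_def qx2_def qx3_def axis_def)
qed

lemma period_eval:
  assumes der: "\<And>q. (f has_derivative \<omega> q) (at q)"
  shows "form_integral \<omega> (gam lam h) = f ((1/2) *\<^sub>R lam h) - f ((-1/2) *\<^sub>R lam h)"
proof -
  have vd: "vector_derivative (gam lam h) (at s within {0..1}) = lam h" if "s \<in> {0..1}" for s
  proof -
    have "(gam lam h has_vector_derivative lam h) (at s within {0..1})"
      unfolding gam_def has_vector_derivative_def
      by (auto intro!: derivative_eq_intros)
    then show ?thesis using vector_derivative_within_cbox[of 0 1 s] that by (simp add: cbox_interval)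
  qed
  have lin: "linear (\<omega> q)" for q using der has_derivative_linear by blast
  have fd: "((\<lambda>s. f (gam lam h s)) has_vector_derivative \<omega> (gam lam h s) (lam h)) (at s within {0..1})" for s
  proof -
    have "((\<lambda>s. f (gam lam h s)) has_derivative (\<lambda>t. \<omega> (gam lam h s) (t *\<^sub>R lam h))) (at s)"
      unfolding gam_def by (rule has_derivative_compose[OF _ der]) (auto intro!: derivative_eq_intros)
    then show ?thesis unfolding has_vector_derivative_def
      by (simp add: linear_cmul[OF lin] has_derivative_at_withinI)
  qed
  have "((\<lambda>s. \<omega> (gam lam h s) (lam h)) has_integral (f (gam lam h 1) - f (gam lam h 0))) {0..1}"
    by (rule fundamental_theorem_of_calculus) (use fd in auto)
  then have "integral {0..1} (\<lambda>s. \<omega> (gam lam h s) (lam h)) = f (gam lam h 1) - f (gam lam h 0)"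
    by (rule integral_unique)
  moreover have "integral {0..1} (\<lambda>s. \<omega> (gam lam h s) (vector_derivative (gam lam h) (at s within {0..1})))
      = integral {0..1} (\<lambda>s. \<omega> (gam lam h s) (lam h))"
    by (rule integral_cong) (simp add: vd)
  ultimately show ?thesis unfolding form_integral_def by (simp add: gam_def)
qed



lemma int_list_zero:
  fixes f :: "'b \<Rightarrow> 'a::euclidean_space \<Rightarrow> real"
  assumes "\<And>t. t \<in> set ts \<Longrightarrow> continuous_on UNIV (f t) \<and> integral (cbox 0 One) (f t) = 0"
  shows "continuous_on UNIV (\<lambda>y. sum_list (map (\<lambda>t. f t y) ts)) \<and>
    integral (cbox 0 One) (\<lambda>y. sum_list (map (\<lambda>t. f t y) ts)) = 0"
  using assms
proof (induction ts)
  case Nil then show ?case by simp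
next
  case (Cons t ts)
  then have h: "continuous_on UNIV (f t)" "integral (cbox 0 One) (f t) = 0"
    "continuous_on UNIV (\<lambda>y. sum_list (map (\<lambda>t. f t y) ts))"
    "integral (cbox 0 One) (\<lambda>y. sum_list (map (\<lambda>t. f t y) ts)) = 0" by auto
  have "continuous_on UNIV (\<lambda>y. f t y + sum_list (map (\<lambda>t. f t y) ts))"
    using h(1,3) by (intro continuous_intros) auto
  moreover have "integral (cbox 0 One) (\<lambda>y. f t y + sum_list (map (\<lambda>t. f t y) ts)) = 0"
    using int_add_c[OF h(1) h(3)] h(2,4) by simp
  ultimately show ?case by simp
qed

lemma diff_swap4: fixes a b c d :: "'a::ab_group_add" shows "a - b = c - d \<Longrightarrow> a - c = b - d"
  by (simp add: algebra_simps eq_diff_eq diff_eq_eq)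

lemma UNIV4: "(UNIV::4 set) = {1,2,3,4}" using exhaust_4 by auto


lemma nat4: "{1..4::nat} = {1,2,3,4}" by auto

theorem mainTheorem13:
  fixes lam :: "nat \<Rightarrow> real^4"
  assumes "inj_on lam {1..4}" and "independent (lam ` {1..4})"
  shows "inj_on (period_map lam) (H1 lam)"
proof (rule inj_onI)
  fix \<omega>1 \<omega>2 assume w1: "\<omega>1 \<in> H1 lam" and w2: "\<omega>2 \<in> H1 lam"
    and pe: "period_map lam \<omega>1 = period_map lam \<omega>2"
  obtain f1 where f1: "left_regular f1" "\<And>q. (f1 has_derivative \<omega>1 q) (at q)"
    and per1: "\<And>l q. l \<in> lattice lam \<Longrightarrow> \<omega>1 (q + l) = \<omega>1 q" using w1 unfolding H1_def by blast
  obtain f2 where f2: "left_regular f2" "\<And>q. (f2 has_derivative \<omega>2 q) (at q)"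
    and per2: "\<And>l q. l \<in> lattice lam \<Longrightarrow> \<omega>2 (q + l) = \<omega>2 q" using w2 unfolding H1_def by blast
  define g where "g = (\<lambda>q. f1 q - f2 q)"
  define \<omega> where "\<omega> = (\<lambda>q v. \<omega>1 q v - \<omega>2 q v)"
  have dg: "\<And>q. (g has_derivative \<omega> q) (at q)" unfolding g_def \<omega>_def
    by (rule has_derivative_diff[OF f1(2) f2(2)])
  have c\<omega>: "\<And>v. continuous_on UNIV (\<lambda>q. \<omega> q v)" unfolding \<omega>_def
    using lr_props(1)[OF f1] lr_props(1)[OF f2] by (intro continuous_intros)
  have per\<omega>: "\<And>l q. l \<in> lattice lam \<Longrightarrow> \<omega> (q + l) = \<omega> q" unfolding \<omega>_def using per1 per2 by simp
  have lamL: "lam h \<in> lattice lam" if "h \<in> {1..4}" for h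
  proof -
    have "(\<Sum>j\<in>{1..4}. of_int (if j = h then 1 else 0) *\<^sub>R lam j) = (\<Sum>j\<in>{1..4}. if h = j then lam j else 0)"
      by (rule sum.cong) auto
    also have "\<dots> = lam h" using that by (simp add: sum.delta)
    finally have "(\<Sum>j\<in>{1..4}. of_int (if j = h then 1 else 0) *\<^sub>R lam j) = lam h" .
    then show ?thesis unfolding lattice_def by (intro CollectI exI[of _ "\<lambda>j. if j = h then 1 else 0"]) auto
  qed
  have Fu: "\<omega> q (axis 1 1) $ 1 - \<omega> q (axis 2 1) $ 2 - \<omega> q (axis 3 1) $ 3 - \<omega> q (axis 4 1) $ 4 = 0"
    "\<omega> q (axis 1 1) $ 2 + \<omega> q (axis 2 1) $ 1 + \<omega> q (axis 3 1) $ 4 - \<omega> q (axis 4 1) $ 3 = 0"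
    "\<omega> q (axis 1 1) $ 3 - \<omega> q (axis 2 1) $ 4 + \<omega> q (axis 3 1) $ 1 + \<omega> q (axis 4 1) $ 2 = 0"
    "\<omega> q (axis 1 1) $ 4 + \<omega> q (axis 2 1) $ 3 - \<omega> q (axis 3 1) $ 2 + \<omega> q (axis 4 1) $ 1 = 0" for q
    using fueter_comp[OF lr_props(2)[OF f1, of q]] fueter_comp[OF lr_props(2)[OF f2, of q]]
    unfolding \<omega>_def by (simp_all add: algebra_simps)
  have pereq: "f1 ((1/2) *\<^sub>R lam h) - f1 ((-1/2) *\<^sub>R lam h) = f2 ((1/2) *\<^sub>R lam h) - f2 ((-1/2) *\<^sub>R lam h)"
    if "h \<in> {1..4}" for h
  proof -
    have "form_integral \<omega>1 (gam lam h) = form_integral \<omega>2 (gam lam h)"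
    proof -
      have e: "period_map lam \<omega>1 $ i = period_map lam \<omega>2 $ i" for i using pe by simp
      show ?thesis using that e[of 1] e[of 2] e[of 3] e[of 4] unfolding nat4
        by (auto simp: period_map_def)
    qed
    then show ?thesis using period_eval[OF f1(2)] period_eval[OF f2(2)] by metis
  qed
  have gper: "g (q + lam h) = g q" if h: "h \<in> {1..4}" for h q
  proof -
    have "\<exists>c. \<forall>x\<in>UNIV. g (x + lam h) - g x = c"
    proof (rule has_derivative_zero_constant)
      fix x :: "real^4"
      have "((\<lambda>x. g (x + lam h) - g x) has_derivative (\<lambda>v. \<omega> (x + lam h) v - \<omega> x v)) (at x)"
        by (rule has_derivative_diff[OF der_shift[OF dg] dg])
      then show "((\<lambda>x. g (x + lam h) - g x) has_derivative (\<lambda>h. 0)) (at x within UNIV)"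
        using per\<omega>[OF lamL[OF h]] by simp
    qed simp
    then obtain c where c: "\<And>x. g (x + lam h) - g x = c" by blast
    have e: "(-1/2) *\<^sub>R lam h + lam h = (1/2) *\<^sub>R lam h"
    proof -
      have "(-1/2) *\<^sub>R lam h + lam h = (-1/2 + 1) *\<^sub>R lam h" by (simp add: scaleR_left_distrib)
      then show ?thesis by simp
    qed
    have "c = g ((1/2) *\<^sub>R lam h) - g ((-1/2) *\<^sub>R lam h)"
      using c[of "(-1/2) *\<^sub>R lam h"] unfolding e by simp
    also have "\<dots> = 0" using diff_swap4[OF pereq[OF h]] unfolding g_def by simp
    finally show ?thesis using c[of q] by simp
  qed
  define idx :: "4 \<Rightarrow> nat" where "idx i = (if i = 1 then 1 else if i = 2 then 2 else if i = 3 then 3 else 4)" for i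
  have idx_in: "idx i \<in> {1..4}" for i by (simp add: idx_def)
  define Lv where "Lv i = lam (idx i)" for i
  have LvL: "Lv i \<in> lattice lam" for i unfolding Lv_def using lamL[OF idx_in] .
  define A :: "real^4 \<Rightarrow> real^4" where "A y = (\<Sum>i\<in>UNIV. y $ i *\<^sub>R Lv i)" for y
  have linA: "linear A"
    by (rule linearI) (simp_all add: A_def scaleR_add_left sum.distrib scaleR_sum_right)
  have Aadd: "A (x + y) = A x + A y" for x y using linear_add[OF linA] .
  have Aaxis: "A (axis i 1) = Lv i" for i
  proof -
    have "A (axis i 1) = (\<Sum>j\<in>UNIV. if i = j then Lv j else 0)"
      unfolding A_def by (rule sum.cong) (auto simp: axis_def)
    then show ?thesis by simp
  qed
  have Aint: "A (\<chi> k. of_int (n k)) \<in> lattice lam" for n :: "4 \<Rightarrow> int"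
  proof -
    define m where "m h = n (if h = 1 then 1 else if h = 2 then 2 else if h = 3 then 3 else 4)" for h :: nat
    have eqm: "(\<Sum>h\<in>{1..4}. of_int (m h) *\<^sub>R lam h) = A (\<chi> k. of_int (n k))"
      unfolding nat4 A_def UNIV4 by (simp add: m_def Lv_def idx_def)
    show ?thesis unfolding lattice_def by (rule CollectI, rule exI[of _ m], simp only: eqm refl simp_thms)
  qed
  have rLv: "range Lv = lam ` {1..4}"
    unfolding UNIV4 nat4 by (simp add: Lv_def idx_def)
  have injLv: "inj Lv"
  proof (rule injI)
    fix i j assume "Lv i = Lv j"
    then have "idx i = idx j" using assms(1) idx_in unfolding Lv_def inj_on_def by blast
    then show "i = j" using exhaust_4[of i] exhaust_4[of j] by (auto simp: idx_def)
  qed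
  have A0: "y = 0" if "A y = 0" for y
  proof -
    have ind: "independent (range Lv)" using assms(2) rLv by simp
    define c where "c v = y $ (inv Lv v)" for v
    have "(\<Sum>v\<in>range Lv. c v *\<^sub>R v) = (\<Sum>i\<in>UNIV. c (Lv i) *\<^sub>R Lv i)"
      by (rule sum.reindex[OF injLv, unfolded comp_def])
    also have "\<dots> = A y" unfolding A_def c_def by (simp add: inv_f_f[OF injLv])
    finally have "(\<Sum>v\<in>range Lv. c v *\<^sub>R v) = 0" using that by simp
    then have "\<forall>v\<in>range Lv. c v = 0" using ind unfolding independent_explicit by blast
    then show ?thesis unfolding c_def by (auto simp: vec_eq_iff inv_f_f[OF injLv])
  qed
  have surjA: "surj A"
  proof (rule linear_injective_imp_surjective[OF linA])
    show "inj A" using A0 linear_injective_0[OF linA] by blast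
  qed simp
  define u where "u i = (SOME y. A y = axis i 1)" for i
  have Au: "A (u i) = axis i 1" for i
    unfolding u_def by (rule someI_ex) (use surjA in \<open>metis surjD\<close>)
  define a where "a j y = g (A y) $ j" for j y
  define a' where "a' j y w = \<omega> (A y) (A w) $ j" for j y w
  have dA: "(A has_derivative A) (at y)" for y using linear_imp_has_derivative[OF linA] .
  have da: "(a j has_derivative a' j y) (at y)" for j y
    unfolding a_def a'_def
    by (rule bounded_linear.has_derivative[OF bounded_linear_vec_nth has_derivative_compose[OF dA dg]])
  have ca': "continuous_on UNIV (\<lambda>y. a' j y w)" for j w
  proof -
    have "continuous_on UNIV (\<lambda>q. \<omega> q (A w) $ j)"
      by (rule continuous_on_compose2[OF bounded_linear.continuous_on[OF bounded_linear_vec_nth] c\<omega>]) auto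
    then show ?thesis unfolding a'_def
      by (rule continuous_on_compose2[OF _ linear_continuous_on[OF linear_conv_bounded_linear[THEN iffD1, OF linA]]]) auto
  qed
  have Bax: "\<exists>i. k = axis i 1" if "k \<in> Basis" for k :: "real^4"
    using that by (auto simp: Basis_vec_def)
  have pa: "a j (y + k) = a j y" if "k \<in> Basis" for j y k
    using Bax[OF that] gper[OF idx_in] unfolding a_def by (auto simp: Aadd Aaxis Lv_def)
  have pa': "a' j (y + k) w = a' j y w" if "k \<in> Basis" for j y k w
    using Bax[OF that] per\<omega>[OF LvL] unfolding a'_def by (auto simp: Aadd Aaxis)
  define P where "P i j y = \<omega> (A y) (axis i 1) $ j" for i j y
  have aP: "a' j y (u i) = P i j y" for i j y by (simp add: a'_def P_def Au)
  have cP: "continuous_on UNIV (P i j)" for i j using ca'[of j "u i"] unfolding aP .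
  have swapP: "integral (cbox 0 One) (\<lambda>y. P i j y * P k l y) = integral (cbox 0 One) (\<lambda>y. P k j y * P i l y)"
    for i j k l
    using swap[OF da[of j] da[of l] ca' ca' ca' ca' pa pa pa', of "u i" "u k"] unfolding aP .
  have minor0: "integral (cbox 0 One) (\<lambda>y. P i j y * P k l y - P i l y * P k j y) = 0" for i j k l
    using swapP[of i j k l] int_diff_c[of "\<lambda>y. P i j y * P k l y" "\<lambda>y. P i l y * P k j y"] cP
    by (simp add: continuous_on_mult mult.commute)
  define fM where "fM = (\<lambda>(c::real, i::4, k::4, j::4, l::4) y. c * (P i j y * P k l y - P i l y * P k j y))"
  define ts :: "(real \<times> 4 \<times> 4 \<times> 4 \<times> 4) list" where "ts =
     [(2,1,2,1,2), (2,1,3,1,3), (2,1,4,1,4), (-2,2,3,2,3), (-2,2,4,2,4), (-2,3,4,3,4),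
      (-2,1,3,2,4), (2,1,4,2,3), (-2,2,3,1,4), (2,2,4,1,3), (2,1,2,3,4), (-2,3,4,1,2)]"
  define E where "E y = (\<Sum>i\<in>UNIV. \<Sum>j\<in>UNIV. (P i j y)^2)" for y
  have Eeq: "E y = sum_list (map (\<lambda>t. fM t y) ts)" for y
  proof -
    have F0: "P 1 1 y - P 2 2 y - P 3 3 y - P 4 4 y = 0" using Fu(1)[of "A y"] by (simp add: P_def)
    have F1: "P 1 2 y + P 2 1 y + P 3 4 y - P 4 3 y = 0" using Fu(2)[of "A y"] by (simp add: P_def)
    have F2: "P 1 3 y - P 2 4 y + P 3 1 y + P 4 2 y = 0" using Fu(3)[of "A y"] by (simp add: P_def)
    have F3: "P 1 4 y + P 2 3 y - P 3 2 y + P 4 1 y = 0" using Fu(4)[of "A y"] by (simp add: P_def)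
    have "E y - sum_list (map (\<lambda>t. fM t y) ts) =
        (P 1 1 y - P 2 2 y - P 3 3 y - P 4 4 y)^2 + (P 1 2 y + P 2 1 y + P 3 4 y - P 4 3 y)^2
      + (P 1 3 y - P 2 4 y + P 3 1 y + P 4 2 y)^2 + (P 1 4 y + P 2 3 y - P 3 2 y + P 4 1 y)^2"
      by (simp add: E_def fM_def ts_def sum_4 power2_eq_square algebra_simps)
    then show ?thesis using F0 F1 F2 F3 by simp
  qed
  have tsok: "continuous_on UNIV (fM t) \<and> integral (cbox 0 One) (fM t) = 0" for t
  proof -
    obtain c i k j l where t: "t = (c,i,k,j,l)" by (cases t) auto
    have "continuous_on UNIV (fM t)" unfolding t fM_def using cP by (auto intro!: continuous_intros)
    moreover have "integral (cbox 0 One) (fM t) = 0"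
      unfolding t fM_def using minor0 by (simp add: int_cmul_real)
    ultimately show ?thesis ..
  qed
  have Efun: "E = (\<lambda>y. sum_list (map (\<lambda>t. fM t y) ts))" using Eeq by (rule ext)
  have cE: "continuous_on UNIV E" and iE: "integral (cbox 0 One) E = 0"
    using int_list_zero[of ts fM] tsok unfolding Efun by auto
  have E0: "E y = 0" if y: "y \<in> cbox 0 One" for y
  proof (rule has_integral_0_cbox_imp_0[of 0 One E])
    show "continuous_on (cbox 0 One) E" using cE by (rule continuous_on_subset) auto
    show "\<And>x. x \<in> box 0 One \<Longrightarrow> 0 \<le> E x" unfolding E_def by (auto intro!: sum_nonneg)
    show "(E has_integral 0) (cbox 0 One)" using integrable_integral[OF int_cont[OF cE], of 0 One] iE by simp
    show "box 0 (One::real^4) \<noteq> {}" by (simp add: box_ne_empty)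
  qed (use y in auto)
  have P0C: "P i j y = 0" if y: "y \<in> cbox 0 One" for i j y
  proof -
    have "(\<Sum>i\<in>UNIV. \<Sum>j\<in>UNIV. (P i j y)^2) = 0" using E0[OF y] unfolding E_def .
    then have "\<forall>i\<in>UNIV. (\<Sum>j\<in>UNIV. (P i j y)^2) = 0"
      by (subst sum_nonneg_eq_0_iff[symmetric]) (auto intro!: sum_nonneg)
    then have "(\<Sum>j\<in>UNIV. (P i j y)^2) = 0" by blast
    then have "\<forall>j\<in>UNIV. (P i j y)^2 = 0"
      by (subst sum_nonneg_eq_0_iff[symmetric]) auto
    then show ?thesis by simp
  qed
  have P0: "P i j y = 0" for i j y
  proof -
    define z :: "real^4" where "z = (\<chi> k. of_int \<lfloor>y $ k\<rfloor>)"
    have y0: "y - z \<in> cbox 0 One"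
    proof (unfold mem_box, intro ballI)
      fix b :: "real^4" assume bB: "b \<in> Basis"
      then obtain i where b: "b = axis i 1" using Bax by blast
      have "0 \<le> y$i - of_int \<lfloor>y$i\<rfloor>" "y$i - of_int \<lfloor>y$i\<rfloor> \<le> 1"
        using floor_correct[of "y$i"] by linarith+
      then show "0 \<bullet> b \<le> (y - z) \<bullet> b \<and> (y - z) \<bullet> b \<le> One \<bullet> b"
        using bB inner_sum_left_Basis[OF bB, of "\<lambda>x. 1"] unfolding b z_def by (simp add: inner_axis)
    qed
    have "A y = A (y - z) + A z" using Aadd[of "y - z" z] by simp
    then have "\<omega> (A y) = \<omega> (A (y - z))" using per\<omega>[OF Aint[of "\<lambda>k. \<lfloor>y $ k\<rfloor>"]] unfolding z_def by simp
    then have "P i j y = P i j (y - z)" unfolding P_def by simp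
    then show ?thesis using P0C[OF y0] by simp
  qed
  show "\<omega>1 = \<omega>2"
  proof (rule ext)
    fix x
    obtain y where x: "x = A y" using surjA by (metis surjD)
    have lin1: "linear (\<omega>1 x)" using f1(2) has_derivative_linear by blast
    have lin2: "linear (\<omega>2 x)" using f2(2) has_derivative_linear by blast
    show "\<omega>1 x = \<omega>2 x"
    proof (rule linear_eq_stdbasis[OF lin1 lin2])
      fix b :: "real^4" assume "b \<in> Basis"
      then obtain i where b: "b = axis i 1" using Bax by blast
      have "\<forall>j. \<omega>1 x b $ j - \<omega>2 x b $ j = 0" using P0[of i _ y] unfolding P_def \<omega>_def x b by simp
      then show "\<omega>1 x b = \<omega>2 x b" by (simp add: vec_eq_iff)
    qed
  qed
qed

end
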